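(* Let $\theta$ be an irrational real number. For integers $j\geq0$ and real $t>0$ define $$\tau_j(t)=-(-1)^j\,\frac{q_{j-1}-(-1)^j\frac{4i\pi t}{q_{j-2}+\theta_jq_{j-1}}}{q_j+(-1)^j\frac{4i\pi t}{q_{j-1}+\theta_{j+1}q_j}}.$$ Then for all $j\geq0$ and $t>0$, $$\bigl(\tau_j(t)-(-1)^ja_{j+1}\bigr)\,\tau_{j+1}(t)=-1.$$
   Context: Continued fraction notation for irrational $\theta$: $\theta_0=\theta$, $a_k=\lfloor\theta_k\rfloor$, $\theta_{k}=\frac{1}{\theta_{k-1}-a_{k-1}}$ for $k\geq1$. Denominators of convergents: $q_{-2}=1$, $q_{-1}=0$, $q_k=q_{k-2}+a_kq_{k-1}$ for $k\geq0$. *)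

theory Defs
  imports Complex_Main
begin

fun cf_theta :: "real \<Rightarrow> nat \<Rightarrow> real" where
  "cf_theta x 0 = x"
| "cf_theta x (Suc k) = 1 / (cf_theta x k - of_int \<lfloor>cf_theta x k\<rfloor>)"

definition cf_a :: "real \<Rightarrow> nat \<Rightarrow> int" where
  "cf_a x k = \<lfloor>cf_theta x k\<rfloor>"

text \<open>Shifted denominators: cf_qs x n = q_(n-2), so q_(-2) = 1, q_(-1) = 0,
  q_k = q_(k-2) + a_k q_(k-1).\<close>
fun cf_qs :: "real \<Rightarrow> nat \<Rightarrow> int" where
  "cf_qs x 0 = 1"
| "cf_qs x (Suc 0) = 0"
| "cf_qs x (Suc (Suc n)) = cf_qs x n + cf_a x n * cf_qs x (Suc n)"

definition cf_q :: "real \<Rightarrow> int \<Rightarrow> int" where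
  "cf_q x k = cf_qs x (nat (k + 2))"

definition tau :: "real \<Rightarrow> nat \<Rightarrow> real \<Rightarrow> complex" where
  "tau x j t =
     - ((-1) ^ j) *
     ((of_int (cf_q x (int j - 1)) - (-1) ^ j * (4 * \<i> * of_real pi * of_real t)
          / of_real (of_int (cf_q x (int j - 2)) + cf_theta x j * of_int (cf_q x (int j - 1))))
      / (of_int (cf_q x (int j)) + (-1) ^ j * (4 * \<i> * of_real pi * of_real t)
          / of_real (of_int (cf_q x (int j - 1)) + cf_theta x (j + 1) * of_int (cf_q x (int j)))))"

end

theory Submission
  imports Defs
begin

lemma theta_irr: "x \<notin> \<rat> \<Longrightarrow> cf_theta x k \<notin> \<rat>"
proof (induction k)
  case 0 then show ?case by simp
next
  case (Suc k)
  show ?case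
  proof
    assume "cf_theta x (Suc k) \<in> \<rat>"
    then have "1 / (cf_theta x k - of_int \<lfloor>cf_theta x k\<rfloor>) \<in> \<rat>" by simp
    then have "inverse (1 / (cf_theta x k - of_int \<lfloor>cf_theta x k\<rfloor>)) \<in> \<rat>" by (rule Rats_inverse)
    then have "cf_theta x k - of_int \<lfloor>cf_theta x k\<rfloor> \<in> \<rat>" by simp
    then have "cf_theta x k - of_int \<lfloor>cf_theta x k\<rfloor> + of_int \<lfloor>cf_theta x k\<rfloor> \<in> \<rat>"
      by (intro Rats_add) auto
    then show False using Suc by simp
  qed
qed

lemma frac_pos: "x \<notin> \<rat> \<Longrightarrow> cf_theta x k - of_int \<lfloor>cf_theta x k\<rfloor> > 0"
proof -
  assume "x \<notin> \<rat>"
  then have "cf_theta x k \<notin> \<rat>" by (rule theta_irr)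
  then have "cf_theta x k \<noteq> of_int \<lfloor>cf_theta x k\<rfloor>" by (metis Rats_of_int)
  moreover have "of_int \<lfloor>cf_theta x k\<rfloor> \<le> cf_theta x k" by simp
  ultimately show ?thesis by linarith
qed

lemma theta_gt1: "x \<notin> \<rat> \<Longrightarrow> cf_theta x (Suc k) > 1"
proof -
  assume h: "x \<notin> \<rat>"
  have p: "cf_theta x k - of_int \<lfloor>cf_theta x k\<rfloor> > 0" using frac_pos[OF h] .
  have "cf_theta x k - of_int \<lfloor>cf_theta x k\<rfloor> < 1" by linarith
  with p show ?thesis by simp
qed

definition P :: "real \<Rightarrow> nat \<Rightarrow> real" where
  "P x n = of_int (cf_qs x n) + cf_theta x n * of_int (cf_qs x (Suc n))"

lemma P_rec: assumes "x \<notin> \<rat>" shows "P x (Suc n) = cf_theta x (Suc n) * P x n"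
proof -
  let ?f = "cf_theta x n - of_int \<lfloor>cf_theta x n\<rfloor>"
  have f: "?f > 0" using frac_pos[OF assms] .
  have th: "cf_theta x (Suc n) = 1 / ?f" by simp
  have "cf_theta x n = of_int (cf_a x n) + ?f" by (simp add: cf_a_def)
  then show ?thesis using f unfolding P_def th
    by (simp add: field_simps)
qed

lemma P_pos: assumes "x \<notin> \<rat>" shows "P x (Suc n) > 0"
proof (induction n)
  case 0 show ?case using P_rec[OF assms, of 0] theta_gt1[OF assms, of 0]
    by (simp add: P_def del: cf_theta.simps)
next
  case (Suc n) then show ?case using P_rec[OF assms, of "Suc n"] theta_gt1[OF assms, of "Suc n"]
    by (simp del: cf_theta.simps)
qed

lemma alg:
  fixes q1 q2 :: int and a s r p th1 th2 :: real
  assumes s: "s = 1 \<or> s = -1" and r: "r \<noteq> 0" and p: "p > 0" and t1: "th1 > 0" and t2: "th2 > 0"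
    and th: "th2 * (th1 - a) = 1"
  shows "(- complex_of_real s * ((of_real q1 - of_real s * (\<i> * of_real r) / of_real (p / th1)) /
            (of_real q2 + of_real s * (\<i> * of_real r) / of_real p)) - of_real s * of_real a) *
         (complex_of_real s * ((of_real q2 + of_real s * (\<i> * of_real r) / of_real p) /
            (of_real (q1 + a * q2) - of_real s * (\<i> * of_real r) / of_real (th2 * p)))) = -1"
proof -
  have N: "of_real q2 + of_real s * (\<i> * of_real r) / of_real p \<noteq> (0::complex)"
  proof
    assume "of_real q2 + of_real s * (\<i> * of_real r) / of_real p = (0::complex)"
    then have "Im (of_real q2 + of_real s * (\<i> * of_real r) / of_real p) = 0" by simp
    then show False using s r p by (auto simp: Im_divide)
  qed
  have D: "of_real (q1 + a * q2) - of_real s * (\<i> * of_real r) / of_real (th2 * p) \<noteq> (0::complex)"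
  proof
    assume "of_real (q1 + a * q2) - of_real s * (\<i> * of_real r) / of_real (th2 * p) = (0::complex)"
    then have "Im (of_real (q1 + a * q2) - of_real s * (\<i> * of_real r) / of_real (th2 * p)) = 0" by simp
    then show False using s r p t2 by (auto simp: Im_divide)
  qed
  define S where "S = complex_of_real s"
  define c where "c = \<i> * complex_of_real r"
  define M where "M = of_real q1 - S * c / of_real (p / th1)"
  define NN where "NN = of_real q2 + S * c / of_real p"
  define DD where "DD = of_real (q1 + a * q2) - S * c / of_real (th2 * p)"
  have N': "NN \<noteq> 0" using N unfolding NN_def S_def c_def .
  have D': "DD \<noteq> 0" using D unfolding DD_def S_def c_def .
  have t1': "th1 = a + 1/th2" using th t2 by (simp add: field_simps)
  have MD: "M + of_real a * NN = DD"
    unfolding M_def NN_def DD_def t1' using p t2 by (simp add: field_simps)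
  have SS: "S * S = 1" using s unfolding S_def by auto
  have "(- S * (M / NN) - S * of_real a) * (S * (NN / DD)) = - (S * S) * ((M + of_real a * NN) / DD)"
    using N' D' by (simp add: field_simps)
  also have "\<dots> = -1" using SS MD D' by simp
  finally show ?thesis unfolding S_def c_def M_def NN_def DD_def .
qed

lemma cfq1: "cf_q x (int j - 1) = cf_qs x (Suc j)" by (simp add: cf_q_def nat_add_distrib)
lemma cfq2: "cf_q x (int j - 2) = cf_qs x j" by (simp add: cf_q_def)
lemma cfq0: "cf_q x (int j) = cf_qs x (Suc (Suc j))" by (simp add: cf_q_def nat_add_distrib)

theorem theorem6p1:
  fixes \<theta> t :: real and j :: nat
  assumes "\<theta> \<notin> \<rat>" and "t > 0"
  shows "(tau \<theta> j t - (-1) ^ j * of_int (cf_a \<theta> (j + 1))) * tau \<theta> (j + 1) t = -1"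
proof -
  define s :: real where "s = (-1)^j"
  define r where "r = 4 * pi * t"
  define p where "p = P \<theta> (Suc j)"
  define th1 where "th1 = cf_theta \<theta> (Suc j)"
  define th2 where "th2 = cf_theta \<theta> (Suc (Suc j))"
  define a where "a = cf_a \<theta> (Suc j)"
  define q1 where "q1 = cf_qs \<theta> (Suc j)"
  define q2 where "q2 = cf_qs \<theta> (Suc (Suc j))"
  have sc: "((-1::complex)^j) = complex_of_real s" unfolding s_def by simp
  have s1: "s = 1 \<or> s = -1" unfolding s_def by (cases "even j") auto
  have r0: "r \<noteq> 0" unfolding r_def using assms(2) by simp
  have p0: "p > 0" unfolding p_def using P_pos[OF assms(1)] .
  have t1: "th1 > 0" unfolding th1_def using theta_gt1[OF assms(1), of j] by (simp del: cf_theta.simps)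
  have t2: "th2 > 0" unfolding th2_def using theta_gt1[OF assms(1), of "Suc j"] by (simp del: cf_theta.simps)
  have th: "th2 * (th1 - a) = 1" unfolding th2_def th1_def a_def cf_a_def
    using frac_pos[OF assms(1), of "Suc j"] by simp
  have Pj: "P \<theta> j = p / th1" unfolding p_def th1_def using P_rec[OF assms(1), of j] t1
    unfolding th1_def by (simp add: field_simps)
  have Pj2: "P \<theta> (Suc (Suc j)) = th2 * p" unfolding p_def th2_def using P_rec[OF assms(1), of "Suc j"] by simp
  have q3: "cf_qs \<theta> (Suc (Suc (Suc j))) = q1 + a * q2" unfolding q1_def q2_def a_def by simp
  have e1: "tau \<theta> j t = - complex_of_real s * ((of_real q1 - of_real s * (\<i> * of_real r) / of_real (p / th1)) /
            (of_real q2 + of_real s * (\<i> * of_real r) / of_real p))"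
    unfolding tau_def cfq1 cfq2 cfq0 sc
    using Pj unfolding P_def q1_def q2_def p_def r_def
    by (simp add: mult.assoc mult.left_commute)
  have e2a: "tau \<theta> (j+1) t = - ((-1)^(Suc j)) * ((of_int (cf_qs \<theta> (Suc(Suc j))) - (-1)^(Suc j) * (4*\<i>*of_real pi*of_real t) / of_real (P \<theta> (Suc j))) / (of_int (cf_qs \<theta> (Suc(Suc(Suc j)))) + (-1)^(Suc j) * (4*\<i>*of_real pi*of_real t) / of_real (P \<theta> (Suc (Suc j)))))"
    unfolding tau_def P_def by (simp add: cf_q_def nat_add_distrib eval_nat_numeral del: cf_qs.simps cf_theta.simps)
  have q3': "complex_of_int (cf_qs \<theta> (Suc (Suc (Suc j)))) = complex_of_real (real_of_int q1 + real_of_int a * real_of_int q2)"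
    using q3 by simp
  have e2: "tau \<theta> (j+1) t = complex_of_real s * ((of_real q2 + of_real s * (\<i> * of_real r) / of_real p) /
            (of_real (q1 + a * q2) - of_real s * (\<i> * of_real r) / of_real (th2 * p)))"
    unfolding e2a q3' Pj2 power_Suc sc p_def[symmetric] q2_def[symmetric]
    by (simp add: r_def mult.assoc mult.left_commute)
  have fa: "cf_a \<theta> (j + 1) = a" unfolding a_def by simp
  show ?thesis unfolding e1 e2 sc fa
    using alg[OF s1 r0 p0 t1 t2 th] by simp
qed

end
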